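(* Let $n\geq 1$. Then $H_n(x)=\sum_{i=0}^{n}e(i,n)x^i$, where, with $C(a,b)=\binom{a}{b}$, $$e(i,n)=\begin{cases}3^{i}, & 0\leq i\leq n-\lfloor n/2\rfloor-1,\\[4pt] \dfrac{2^{n}C(i,n-i)}{2^{i+1}}+3^{i}\left(1+2^{n}\displaystyle\sum_{j=n-\lfloor n/2\rfloor}^{i}\frac{2n-5j}{j\,6^{j}}C(j,n-j)\right), & n-\lfloor n/2\rfloor\leq i\leq n-1,\\[4pt] 1, & i=n.\end{cases}$$
   Context: The Stern polynomials $B_n(t)\in\mathbb{Z}[t]$ are defined by $B_0(t)=0$, $B_1(t)=1$, and for $n\geq 1$: $B_{2n}(t)=tB_n(t)$, $B_{2n+1}(t)=B_n(t)+B_{n+1}(t)$. For $n\geq1$ let $e(n)=\deg B_n(t)$. For $n\geq 0$ let $H_n(x)=\sum_{m=1}^{2^n}x^{e(m)}$ and for $i,n\geq0$ let $e(i,n)=|\{m\in[1,2^n]\cap\mathbb{Z}:\;e(m)=i\}|$. *)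

theory Defs
  imports Complex_Main "HOL-Computational_Algebra.Polynomial"
begin

function stern :: "nat \<Rightarrow> int poly" where
  "stern n = (if n = 0 then 0 else if n = 1 then 1
              else if even n then [:0, 1:] * stern (n div 2)
              else stern (n div 2) + stern (n div 2 + 1))"
  by auto
termination
  by (relation "measure id") (auto elim!: oddE)

declare stern.simps [simp del]

definition sdeg :: "nat \<Rightarrow> nat" where
  "sdeg m = degree (stern m)"

definition H :: "nat \<Rightarrow> real \<Rightarrow> real" where
  "H n x = (\<Sum>m = 1..2^n. x ^ sdeg m)"

definition ecount :: "nat \<Rightarrow> nat \<Rightarrow> nat" where
  "ecount i n = card {m \<in> {1..2^n}. sdeg m = i}"

end

theory Submission imports Defs begin

lemma stern_0[simp]: "stern 0 = 0" by (simp add: stern.simps)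
lemma stern_1[simp]: "stern (Suc 0) = 1" by (subst stern.simps) simp
lemma stern_even: "k \<ge> 1 \<Longrightarrow> stern (2*k) = [:0,1:] * stern k"
  by (subst stern.simps) simp
lemma stern_odd: "k \<ge> 1 \<Longrightarrow> stern (Suc (2*k)) = stern k + stern (k+1)"
  by (subst stern.simps) simp

lemma stern_nonneg: "coeff (stern n) i \<ge> 0"
proof (induction n arbitrary: i rule: less_induct)
  case (less n)
  show ?case
  proof (cases "n \<le> 1")
    case True then have "n = 0 \<or> n = 1" by auto
    then show ?thesis by (auto simp: coeff_1)
  next
    case False
    show ?thesis
    proof (cases "even n")
      case True
      then obtain k where k: "n = 2*k" by blast
      with False have "k \<ge> 1" "k < n" by auto
      then show ?thesis using less k by (cases i) (auto simp: stern_even)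
    next
      case False': False
      then obtain k where k: "n = 2*k+1" using oddE by blast
      with False have "k \<ge> 1" "k < n" "k+1 < n" by auto
      then show ?thesis using less[of k i] less[of "k+1" i] k by (simp add: stern_odd)
    qed
  qed
qed

lemma stern_nz: "n \<ge> 1 \<Longrightarrow> stern n \<noteq> 0"
proof (induction n rule: less_induct)
  case (less n)
  show ?case
  proof (cases "n = 1")
    case True then show ?thesis by simp
  next
    case False
    show ?thesis
    proof (cases "even n")
      case True
      then obtain k where k: "n = 2*k" by blast
      with False less.prems have "k \<ge> 1" "k < n" by auto
      then show ?thesis using less k by (simp add: stern_even)
    next
      case False': False
      then obtain k where k: "n = 2*k+1" using oddE by blast
      with False have k1: "k \<ge> 1" "k < n" by auto
      then have nz: "stern k \<noteq> 0" using less by auto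
      have l1: "lead_coeff (stern k) \<noteq> 0" using nz by simp
      have l2: "lead_coeff (stern k) \<ge> 0" by (rule stern_nonneg)
      have l3: "coeff (stern (k+1)) (degree (stern k)) \<ge> 0" by (rule stern_nonneg)
      have "coeff (stern k + stern (k+1)) (degree (stern k)) > 0"
      proof -
        have l4: "lead_coeff (stern k) > 0" using l1 l2 by (metis le_neq_trans)
        show ?thesis unfolding coeff_add using l4 l3 by linarith
      qed
      then have "stern k + stern (k+1) \<noteq> 0" by (metis coeff_0 less_irrefl)
      then show ?thesis using k k1 by (simp add: stern_odd)
    qed
  qed
qed

lemma deg_add_nonneg:
  fixes p q :: "int poly"
  assumes p: "\<And>i. coeff p i \<ge> 0" and q: "\<And>i. coeff q i \<ge> 0"
  shows "degree (p+q) = max (degree p) (degree q)"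
proof -
  have key: "degree a \<le> degree (a+b)" if a: "\<And>i. coeff a i \<ge> 0" and b: "\<And>i. coeff b i \<ge> 0"
    for a b :: "int poly"
  proof (cases "a = 0")
    case True then show ?thesis by simp
  next
    case False
    then have "coeff a (degree a) > 0" using a[of "degree a"] by (simp add: order_le_neq_trans)
    then have "coeff (a+b) (degree a) \<noteq> 0" using b[of "degree a"] by simp
    then show ?thesis by (rule le_degree)
  qed
  have "degree (p+q) \<le> max (degree p) (degree q)" by (rule degree_add_le_max)
  moreover have "degree p \<le> degree (p+q)" using key p q by blast
  moreover have "degree q \<le> degree (p+q)" using key[OF q p] by (simp add: add.commute)
  ultimately show ?thesis by simp
qed

lemma sdeg_0[simp]: "sdeg 0 = 0" by (simp add: sdeg_def)
lemma sdeg_1[simp]: "sdeg (Suc 0) = 0" by (simp add: sdeg_def)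
lemma sdeg_even: "k \<ge> 1 \<Longrightarrow> sdeg (2*k) = sdeg k + 1"
  using stern_nz[of k] by (simp add: sdeg_def stern_even degree_mult_eq)
lemma sdeg_odd: "sdeg (2*k+1) = max (sdeg k) (sdeg (k+1))"
proof (cases "k = 0")
  case True then show ?thesis by simp
next
  case False then show ?thesis
    by (simp add: sdeg_def stern_odd deg_add_nonneg stern_nonneg)
qed
lemma sdeg_2[simp]: "sdeg (Suc (Suc 0)) = Suc 0" using sdeg_even[of 1] by (simp add: numeral_2_eq_2)
lemma sdeg_pow2: "sdeg (2^n) = n"
  by (induction n) (auto simp: sdeg_even)

lemma sdeg_odd': "sdeg (Suc (2*k)) = max (sdeg k) (sdeg (Suc k))"
  using sdeg_odd[of k] by simp

lemma sdeg_diff: "k \<ge> 1 \<Longrightarrow> sdeg (k+1) \<le> sdeg k + 1 \<and> sdeg k \<le> sdeg (k+1) + 1"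
proof (induction k rule: less_induct)
  case (less k)
  show ?case
  proof (cases "k = 1")
    case True then show ?thesis by simp
  next
    case False
    show ?thesis
    proof (cases "even k")
      case True
      then obtain m where m: "k = 2*m" by blast
      with False less.prems have m1: "m \<ge> 1" "m < k" by auto
      have IH: "sdeg (m+1) \<le> sdeg m + 1 \<and> sdeg m \<le> sdeg (m+1) + 1" using less m1 by blast
      have a: "sdeg k = sdeg m + 1" using m m1 sdeg_even by simp
      have b: "sdeg (k+1) = max (sdeg m) (sdeg (m+1))" using m sdeg_odd by simp
      show ?thesis using a b IH by auto
    next
      case False': False
      then obtain m where m: "k = 2*m+1" using oddE by blast
      with False have m1: "m \<ge> 1" "m < k" by auto
      have IH: "sdeg (m+1) \<le> sdeg m + 1 \<and> sdeg m \<le> sdeg (m+1) + 1" using less m1 by blast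
      have a: "sdeg (k+1) = sdeg (m+1) + 1" using m sdeg_even[of "m+1"]
        by (simp add: algebra_simps)
      have b: "sdeg k = max (sdeg m) (sdeg (m+1))" using m sdeg_odd by simp
      show ?thesis using a b IH by auto
    qed
  qed
qed

lemma sdeg_le: "m \<le> 2^n \<Longrightarrow> sdeg m \<le> n"
proof (induction n arbitrary: m)
  case 0
  then have "m = 0 \<or> m = 1" by auto
  then show ?case by auto
next
  case (Suc n)
  show ?case
  proof (cases "even m")
    case True
    then obtain k where k: "m = 2*k" by blast
    show ?thesis
    proof (cases "k = 0")
      case True then show ?thesis using k by simp
    next
      case False
      have "k \<le> 2^n" using Suc.prems k by simp
      then show ?thesis using Suc.IH[of k] k False sdeg_even[of k] by simp
    qed
  next
    case False
    then obtain k where k: "m = 2*k+1" using oddE by blast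
    have "2*k+1 \<le> 2*2^n" using Suc.prems k by simp
    then have "k+1 \<le> 2^n" by simp
    then have "sdeg k \<le> n" "sdeg (k+1) \<le> n" using Suc.IH[of k] Suc.IH[of "k+1"] by auto
    then show ?thesis using k sdeg_odd[of k] by simp
  qed
qed

definition gp :: "int \<Rightarrow> nat \<Rightarrow> real poly" where
  "gp d k = (if int (sdeg (k+1)) - int (sdeg k) = d then monom 1 (sdeg k) else 0)"

definition P :: "int \<Rightarrow> nat \<Rightarrow> real poly" where
  "P d n = (\<Sum>k\<in>{2^n..<2^(n+1)}. gp d k)"

lemma sum_double:
  fixes f :: "nat \<Rightarrow> 'a::comm_monoid_add"
  shows "a \<le> b \<Longrightarrow> (\<Sum>k\<in>{2*a..<2*b}. f k) = (\<Sum>k\<in>{a..<b}. f (2*k) + f (2*k+1))"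
proof (induction b)
  case 0 then show ?case by simp
next
  case (Suc b)
  show ?case
  proof (cases "a = Suc b")
    case True then show ?thesis by simp
  next
    case False
    then have ab: "a \<le> b" using Suc.prems by simp
    have "{2*a..<2*Suc b} = insert (2*b+1) (insert (2*b) {2*a..<2*b})" using ab by auto
    then have "(\<Sum>k\<in>{2*a..<2*Suc b}. f k) = f (2*b+1) + (f (2*b) + (\<Sum>k\<in>{2*a..<2*b}. f k))"
      by simp
    also have "\<dots> = (\<Sum>k\<in>{a..<b}. f (2*k) + f (2*k+1)) + (f (2*b) + f (2*b+1))"
      using Suc.IH[OF ab] by (simp add: algebra_simps)
    also have "\<dots> = (\<Sum>k\<in>{a..<Suc b}. f (2*k) + f (2*k+1))" using ab by simp
    finally show ?thesis .
  qed
qed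

lemma X_monom: "[:0,1:] * monom (1::real) a = monom 1 (Suc a)"
  by (simp add: monom_Suc)

lemma gp_step:
  assumes k: "k \<ge> 1"
  shows "gp 1 (2*k) + gp 1 (2*k+1) = [:0,1:] * gp 1 k + gp 0 k"
    "gp 0 (2*k) + gp 0 (2*k+1) = [:0,1:] * gp 1 k + gp (-1) k"
    "gp (-1) (2*k) + gp (-1) (2*k+1) = [:0,1:] * gp 0 k + [:0,1:] * gp (-1) k"
proof -
  have e1: "sdeg (2*k) = sdeg k + 1" using k sdeg_even by simp
  have e2: "sdeg (2*k+1) = max (sdeg k) (sdeg (k+1))" by (rule sdeg_odd)
  have e3: "sdeg (2*k+1+1) = sdeg (k+1) + 1" using sdeg_even[of "k+1"] by (simp add: algebra_simps)
  have D: "sdeg (k+1) \<le> sdeg k + 1 \<and> sdeg k \<le> sdeg (k+1) + 1" using sdeg_diff k by blast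
  have c: "sdeg (k+1) = sdeg k + 1 \<or> sdeg (k+1) = sdeg k \<or> sdeg (k+1) + 1 = sdeg k" using D by auto
  have m: "[:0,1:] * monom (1::real) a = monom 1 (a+1)" for a by (simp add: monom_Suc)
  show "gp 1 (2*k) + gp 1 (2*k+1) = [:0,1:] * gp 1 k + gp 0 k"
    using c unfolding gp_def e3 e2 e1
    by (elim disjE) (simp_all add: monom_Suc)
  show "gp 0 (2*k) + gp 0 (2*k+1) = [:0,1:] * gp 1 k + gp (-1) k"
    using c unfolding gp_def e3 e2 e1
    by (elim disjE) (simp_all add: monom_Suc)
  show "gp (-1) (2*k) + gp (-1) (2*k+1) = [:0,1:] * gp 0 k + [:0,1:] * gp (-1) k"
    using c unfolding gp_def e3 e2 e1
    by (elim disjE) (simp_all add: monom_Suc)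
qed

definition X :: "real poly" where "X = [:0,1:]"

lemma X_pow: "X ^ n = monom 1 n"
  by (induction n) (simp_all add: X_def monom_Suc)

lemma P_step:
  "P 1 (Suc n) = X * P 1 n + P 0 n"
  "P 0 (Suc n) = X * P 1 n + P (-1) n"
  "P (-1) (Suc n) = X * P 0 n + X * P (-1) n"
proof -
  have lev: "P d (Suc n) = (\<Sum>k\<in>{2^n..<2^(n+1)}. gp d (2*k) + gp d (2*k+1))" for d
  proof -
    have "P d (Suc n) = (\<Sum>k\<in>{2*2^n..<2*2^(n+1)}. gp d k)" by (simp add: P_def)
    also have "\<dots> = (\<Sum>k\<in>{2^n..<2^(n+1)}. gp d (2*k) + gp d (2*k+1))"
      by (rule sum_double) simp
    finally show ?thesis .
  qed
  have k1: "k \<in> {2^n..<2^(n+1)} \<Longrightarrow> k \<ge> 1" for k :: nat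
    using one_le_power[of "2::nat" n] by auto
  note gs = gp_step[unfolded X_def[symmetric]]
  have S: "(\<Sum>k\<in>{2^n..<2^(n+1)}. X * gp a k + gp b k) = X * P a n + P b n" for a b
    by (simp add: P_def sum_distrib_left sum.distrib)
  have S2: "(\<Sum>k\<in>{2^n..<2^(n+1)}. X * gp a k + X * gp b k) = X * P a n + X * P b n" for a b
    by (simp add: P_def sum_distrib_left sum.distrib)
  show "P 1 (Suc n) = X * P 1 n + P 0 n"
    unfolding lev S[symmetric] by (rule sum.cong[OF refl], rule gs(1), rule k1, assumption)
  show "P 0 (Suc n) = X * P 1 n + P (-1) n"
    unfolding lev S[symmetric] by (rule sum.cong[OF refl], rule gs(2), rule k1, assumption)
  show "P (-1) (Suc n) = X * P 0 n + X * P (-1) n"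
    unfolding lev S2[symmetric] by (rule sum.cong[OF refl], rule gs(3), rule k1, assumption)
qed

fun u :: "nat \<Rightarrow> real poly" where
  "u 0 = 1"
| "u (Suc 0) = X"
| "u (Suc (Suc n)) = X * u (Suc n) + 2 * X * u n"

lemma P_closed:
  "2 * P 1 n = X^n + u n \<and> 2 * P 0 n = u (Suc n) - X * u n \<and> 2 * P (-1) n = X * u n - X^(Suc n)"
proof (induction n)
  case 0
  have e: "{2^0..<2^(0+1)} = {1::nat}" by auto
  have "P d 0 = gp d 1" for d unfolding P_def e by simp
  then show ?case by (simp add: gp_def)
next
  case (Suc n)
  then have A: "2 * P 1 n = X^n + u n" and B: "2 * P 0 n = u (Suc n) - X * u n"
    and C: "2 * P (-1) n = X * u n - X^(Suc n)" by auto
  have "2 * P 1 (Suc n) = X * (2 * P 1 n) + 2 * P 0 n" by (simp add: P_step algebra_simps)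
  also have "\<dots> = X^Suc n + u (Suc n)" unfolding A B by (simp add: algebra_simps)
  finally have 1: "2 * P 1 (Suc n) = X^Suc n + u (Suc n)" .
  have "2 * P 0 (Suc n) = X * (2 * P 1 n) + 2 * P (-1) n" by (simp add: P_step algebra_simps)
  also have "\<dots> = u (Suc (Suc n)) - X * u (Suc n)" unfolding A C by (simp add: algebra_simps)
  finally have 2: "2 * P 0 (Suc n) = u (Suc (Suc n)) - X * u (Suc n)" .
  have "2 * P (-1) (Suc n) = X * (2 * P 0 n) + X * (2 * P (-1) n)" by (simp add: P_step algebra_simps)
  also have "\<dots> = X * u (Suc n) - X^(Suc (Suc n))" unfolding B C by (simp add: algebra_simps)
  finally have 3: "2 * P (-1) (Suc n) = X * u (Suc n) - X^(Suc (Suc n))" .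
  show ?case using 1 2 3 by blast
qed

definition Hp :: "nat \<Rightarrow> real poly" where
  "Hp n = (\<Sum>m = 1..2^n. monom 1 (sdeg m))"

lemma level_sum: "(\<Sum>k\<in>{2^n..<2^(n+1)}. monom 1 (sdeg k)) = P 1 n + P 0 n + P (-1) n"
proof -
  have k1: "k \<in> {2^n..<2^(n+1)} \<Longrightarrow> k \<ge> 1" for k :: nat
    using one_le_power[of "2::nat" n] by auto
  have "monom 1 (sdeg k) = gp 1 k + gp 0 k + gp (-1) k" if "k \<ge> 1" for k
  proof -
    have D: "sdeg (k+1) \<le> sdeg k + 1 \<and> sdeg k \<le> sdeg (k+1) + 1" using sdeg_diff that by blast
    have c: "sdeg (k+1) = sdeg k + 1 \<or> sdeg (k+1) = sdeg k \<or> sdeg (k+1) + 1 = sdeg k" using D by auto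
    then show ?thesis unfolding gp_def by (elim disjE) simp_all
  qed
  then show ?thesis unfolding P_def sum.distrib[symmetric] using k1
    by (intro sum.cong) auto
qed

lemma Hp_step: "Hp (Suc n) = Hp n + (P 1 n + P 0 n + P (-1) n) - X^n + X^(Suc n)"
proof -
  let ?f = "\<lambda>m. monom (1::real) (sdeg m)"
  have p1: "(1::nat) \<le> 2^n" by simp
  have p2: "(2::nat)^n \<le> 2^(n+1)" by simp
  have a: "Hp n = sum ?f {1..<2^n} + ?f (2^n)"
    unfolding Hp_def atLeastLessThanSuc_atLeastAtMost[symmetric] using p1 by simp
  have b: "Hp (Suc n) = sum ?f {1..<2^(n+1)} + ?f (2^(n+1))"
    unfolding Hp_def atLeastLessThanSuc_atLeastAtMost[symmetric] by simp
  have c: "sum ?f {1..<2^(n+1)} = sum ?f {1..<2^n} + sum ?f {2^n..<2^(n+1)}"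
    by (rule sum.atLeastLessThan_concat[OF p1 p2, symmetric])
  show ?thesis unfolding b c level_sum[symmetric] using a
    by (simp add: sdeg_pow2 X_pow algebra_simps del: power_Suc)
qed

lemma Hp_identity:
  "2 * (1 - 3*X) * Hp n = X^n - 3 * X^(Suc n) + 2 - (1 + X) * u n - 2 * u (Suc n)"
proof (induction n)
  case 0
  have "Hp 0 = 1" by (simp add: Hp_def)
  then show ?case by (simp add: algebra_simps)
next
  case (Suc n)
  have L: "2 * (P 1 n + P 0 n + P (-1) n) = X^n - X^Suc n + u n + u (Suc n)"
    using P_closed[of n] by (simp add: algebra_simps)
  have "2 * (1 - 3*X) * Hp (Suc n) = 2 * (1 - 3*X) * Hp n + (1 - 3*X) * (2 * (P 1 n + P 0 n + P (-1) n))
     - 2 * (1 - 3*X) * X^n + 2 * (1 - 3*X) * X^Suc n"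
    unfolding Hp_step by (simp add: algebra_simps)
  also have "\<dots> = X^Suc n - 3 * X^(Suc (Suc n)) + 2 - (1 + X) * u (Suc n) - 2 * u (Suc (Suc n))"
    unfolding Suc.IH L by (simp add: algebra_simps)
  finally show ?case .
qed

definition v :: "nat \<Rightarrow> nat \<Rightarrow> real" where
  "v n i = (if i \<le> n then 2^(n-i) * real (i choose (n-i)) else 0)"

lemma coeff_X_mult: "coeff (X * p) i = (if i = 0 then 0 else coeff p (i - 1))"
  by (cases i) (simp_all add: X_def)

lemma coeff_num_mult[simp]: "coeff (numeral k * p) i = numeral k * coeff (p::real poly) i"
  by (simp add: numeral_poly)
lemma coeff_num[simp]: "coeff (numeral k :: real poly) i = (if i = 0 then numeral k else 0)"
  by (simp add: numeral_poly coeff_pCons split: nat.split)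

lemma coeff_2_mult: "coeff (2 * p) i = 2 * coeff (p::real poly) i"
  by (simp add: numeral_poly)

lemma v_rec: "v (Suc (Suc n)) (Suc i) = v (Suc n) i + 2 * v n i"
proof (cases "i \<le> n")
  case True
  then have e: "Suc n - i = Suc (n - i)" by simp
  have "v (Suc (Suc n)) (Suc i) = 2^(Suc n - i) * real (Suc i choose (Suc n - i))"
    using True by (simp add: v_def)
  also have "\<dots> = 2^(Suc n - i) * real (i choose (Suc n - i)) + 2 * (2^(n-i) * real (i choose (n-i)))"
    unfolding e by (simp add: algebra_simps)
  finally show ?thesis using True by (simp add: v_def)
next
  case False
  then show ?thesis by (cases "i = Suc n") (auto simp: v_def)
qed

lemma coeff_u: "coeff (u n) i = v n i"
proof (induction n arbitrary: i rule: u.induct)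
  case 1 then show ?case by (cases i) (auto simp: v_def)
next
  case 2 then show ?case
    by (cases i) (auto simp: v_def X_def coeff_pCons split: nat.splits)
next
  case (3 n)
  show ?case
  proof (cases i)
    case 0 then show ?thesis by (simp add: coeff_X_mult mult.assoc coeff_2_mult v_def)
  next
    case (Suc j)
    then show ?thesis
      by (simp add: coeff_X_mult mult.assoc coeff_2_mult 3 v_rec)
  qed
qed

lemma coeff_Hp: "coeff (Hp n) i = real (ecount i n)"
proof -
  have "coeff (Hp n) i = (\<Sum>m\<in>{1..2^n}. if sdeg m = i then 1 else 0)"
    by (simp add: Hp_def coeff_sum coeff_monom)
  also have "\<dots> = (\<Sum>m\<in>{m \<in> {1..2^n}. sdeg m = i}. 1)"
    by (rule sum.inter_filter[OF finite_atLeastAtMost, symmetric])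
  also have "\<dots> = real (ecount i n)" by (simp add: ecount_def)
  finally show ?thesis .
qed

lemma ecount_big: "i > n \<Longrightarrow> ecount i n = 0"
proof -
  assume "i > n"
  then have "{m \<in> {1..2^n}. sdeg m = i} = {}" using sdeg_le[of _ n] by fastforce
  then show ?thesis by (simp add: ecount_def)
qed

lemma coeff_rel:
  fixes n j :: nat
  defines "c \<equiv> \<lambda>i. real (ecount i n)"
  shows "2 * c 0 = (if n = 0 then 1 else 0) + 2 - v n 0 - 2 * v (Suc n) 0"
    and "2 * c (Suc j) - 6 * c j = (if Suc j = n then 1 else 0) - 3 * (if j = n then 1 else 0)
           - v n (Suc j) - v n j - 2 * v (Suc n) (Suc j)"
proof -
  have I: "2 * Hp n - 6 * (X * Hp n) = X^n - 3 * X^(Suc n) + 2 - u n - X * u n - 2 * u (Suc n)"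
    using Hp_identity[of n] by (simp add: algebra_simps)
  have ci: "coeff (2 * Hp n - 6 * (X * Hp n)) i = coeff (X^n - 3 * X^(Suc n) + 2 - u n - X * u n - 2 * u (Suc n)) i" for i
    using I by simp
  have six: "coeff (6 * p) i = 6 * coeff p i" for p :: "real poly" and i
    by (simp add: numeral_poly)
  show "2 * c 0 = (if n = 0 then 1 else 0) + 2 - v n 0 - 2 * v (Suc n) 0"
    using ci[of 0] by (simp add: c_def coeff_Hp coeff_X_mult coeff_2_mult six X_pow coeff_u)
  show "2 * c (Suc j) - 6 * c j = (if Suc j = n then 1 else 0) - 3 * (if j = n then 1 else 0)
           - v n (Suc j) - v n j - 2 * v (Suc n) (Suc j)"
    using ci[of "Suc j"] by (simp add: c_def coeff_Hp coeff_X_mult coeff_2_mult six X_pow coeff_u)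
qed

definition G :: "nat \<Rightarrow> nat \<Rightarrow> real" where
  "G n i = 2 ^ n * real (i choose (n - i)) / 2 ^ (i + 1)
           + 3 ^ i * (1 + 2 ^ n * (\<Sum>j = n - n div 2..i.
               (2 * real n - 5 * real j) / (real j * 6 ^ j) * real (j choose (n - j))))"

lemma absorb_real: "real (Suc j) * real (j choose k) = (real (Suc j) - real k) * real (Suc j choose k)"
proof (cases "k \<le> Suc j")
  case True
  have "(Suc j - k) * (Suc j choose k) = Suc j * ((Suc j - 1) choose k)" by (rule binomial_absorb_comp)
  then have "real ((Suc j - k) * (Suc j choose k)) = real (Suc j * (j choose k))" by simp
  then show ?thesis using True by (simp only: of_nat_mult of_nat_diff)
next
  case False
  then have z1: "j choose k = 0" and z2: "Suc j choose k = 0" by (simp_all add: binomial_eq_0)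
  show ?thesis unfolding z1 z2 by simp
qed

lemma G_step:
  assumes "Suc j + k = n" "k \<ge> 1"
  shows "2 * G n (Suc j) - 6 * G n j = - v n (Suc j) - v n j - 2 * v (Suc n) (Suc j)"
proof -
  let ?t = "\<lambda>j. (2 * real n - 5 * real j) / (real j * 6 ^ j) * real (j choose (n - j))"
  let ?a = "n - n div 2"
  have sumS: "(\<Sum>l = ?a..Suc j. ?t l) = (\<Sum>l = ?a..j. ?t l) + ?t (Suc j)"
  proof (cases "?a \<le> Suc j")
    case True then show ?thesis by (simp add: sum.cl_ivl_Suc)
  next
    case False
    then have "Suc j choose (n - Suc j) = 0" by (intro binomial_eq_0) linarith
    then show ?thesis using False by (simp add: sum.cl_ivl_Suc)
  qed
  have nk: "n - Suc j = k" "n - j = Suc k" "Suc n - Suc j = Suc k" using assms by auto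
  have vs: "v n (Suc j) = 2^k * real (Suc j choose k)"
     "v n j = 2^(Suc k) * real (j choose Suc k)"
     "v (Suc n) (Suc j) = 2^(Suc k) * real (Suc j choose Suc k)"
    using assms nk by (auto simp: v_def)
  have pas: "real (Suc j choose Suc k) = real (j choose k) + real (j choose Suc k)" by simp
  have ab: "real (Suc j) * real (j choose k) = (real (Suc j) - real k) * real (Suc j choose k)"
    by (rule absorb_real)
  have rn: "real n = real (Suc j) + real k" using assms by simp
  define A where "A = (2::real)^j"
  define B where "B = (2::real)^k"
  define T where "T = (3::real)^j"
  have p1: "(2::real)^n = 2 * A * B"
  proof -
    have "n = Suc (j + k)" using assms by simp
    then show ?thesis by (simp add: A_def B_def power_add)
  qed
  have p6: "(6::real)^Suc j = 6 * A * T" unfolding A_def T_def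
    by (simp add: power_mult_distrib[symmetric])
  have A0: "A > 0" "B > 0" "T > 0" by (auto simp: A_def B_def T_def)
  define x where "x = real (Suc j choose k)"
  define y where "y = real (j choose k)"
  define z where "z = real (j choose Suc k)"
  have G1: "G n (Suc j) = 2 ^ n * x / 2 ^ (Suc j + 1) + 3 ^ Suc j * (1 + 2 ^ n * ((\<Sum>l = ?a..j. ?t l) + ?t (Suc j)))"
  proof -
    have "G n (Suc j) = 2 ^ n * x / 2 ^ (Suc j + 1) + 3 ^ Suc j * (1 + 2 ^ n * (\<Sum>l = ?a..Suc j. ?t l))"
      unfolding G_def x_def nk(1) by (rule refl)
    then show ?thesis unfolding sumS .
  qed
  have G0: "G n j = 2 ^ n * z / 2 ^ (j + 1) + 3 ^ j * (1 + 2 ^ n * (\<Sum>l = ?a..j. ?t l))"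
    unfolding G_def nk(2) z_def by (rule refl)
  have tS: "?t (Suc j) = (2 * real n - 5 * real (Suc j)) / (real (Suc j) * (6 * A * T)) * x"
    unfolding p6[symmetric] nk x_def by simp
  have ab': "real (Suc j) * y = (real (Suc j) - real k) * x" using ab by (simp add: x_def y_def)
  have vs': "v n (Suc j) = B * x" "v n j = 2 * B * z" "v (Suc n) (Suc j) = 2 * B * (y + z)"
    using vs pas by (simp_all add: B_def x_def y_def z_def)
  show ?thesis
  proof -
    have j0: "(1::real) + real j > 0" by simp
    have "A * (T * 6) + A * (T * (real j * 6)) = 6 * A * T * (1 + real j)" by (simp add: algebra_simps)
    then have dn: "A * (T * 6) + A * (T * (real j * 6)) \<noteq> 0" using A0 j0 by simp
    have ab1: "y + (x * real k + y * real j) = x + x * real j" using ab' by (simp add: algebra_simps)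
    have ab2: "A * (B * (T * (y * 48))) + (A * (B * (T * (x * (real k * 48)))) + A * (B * (T * (y * (real j * 48))))) = A * (B * (T * (x * 48))) + A * (B * (T * (x * (real j * 48))))"
    proof -
      have "(48*A*B*T) * (y + (x * real k + y * real j)) = (48*A*B*T) * (x + x * real j)" using ab1 by simp
      then show ?thesis by (simp add: algebra_simps)
    qed
    show ?thesis unfolding G1 G0 tS vs' p1 using A0 ab' rn dn j0
      by (simp add: field_simps T_def[symmetric] A_def[symmetric]) (rule ab2)
  qed
qed

lemma c_eq_G: "n \<ge> 1 \<Longrightarrow> i \<le> n - 1 \<Longrightarrow> real (ecount i n) = G n i"
proof (induction i)
  case 0
  have v0: "v n 0 = 0" "v (Suc n) 0 = 0" using 0 by (auto simp: v_def)
  have c0: "real (ecount 0 n) = 1" using coeff_rel(1)[of n] 0 v0 by simp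
  have a: "n - n div 2 > 0" using 0 by simp
  have "G n 0 = 1" using a 0 by (simp add: G_def)
  then show ?case using c0 by simp
next
  case (Suc j)
  then have IH: "real (ecount j n) = G n j" by simp
  have r: "2 * real (ecount (Suc j) n) - 6 * real (ecount j n) = - v n (Suc j) - v n j - 2 * v (Suc n) (Suc j)"
    proof -
    have "j \<noteq> n" "Suc j \<noteq> n" using Suc.prems by auto
    then show ?thesis using coeff_rel(2)[where n=n and j=j] by simp
  qed
  have g: "2 * G n (Suc j) - 6 * G n j = - v n (Suc j) - v n j - 2 * v (Suc n) (Suc j)"
    by (rule G_step[of j "n - Suc j"]) (use Suc.prems in auto)
  show ?case using r g IH by simp
qed

lemma G_low: "i \<le> n - n div 2 - 1 \<Longrightarrow> n \<ge> 1 \<Longrightarrow> G n i = 3 ^ i"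
proof -
  assume a: "i \<le> n - n div 2 - 1" "n \<ge> 1"
  then have "i choose (n - i) = 0" by (intro binomial_eq_0) linarith
  moreover have "{n - n div 2..i} = {}" using a by auto
  ultimately show ?thesis by (simp add: G_def)
qed

lemma c_top: "n \<ge> 1 \<Longrightarrow> real (ecount n n) = 1"
proof -
  assume n: "n \<ge> 1"
  have "ecount (Suc n) n = 0" by (rule ecount_big) simp
  moreover have "v n (Suc n) = 0" "v n n = 1" "v (Suc n) (Suc n) = 1" by (auto simp: v_def)
  ultimately show ?thesis using coeff_rel(2)[of n n] by simp
qed

lemma H_expand: "H n x = (\<Sum>i = 0..n. real (ecount i n) * x ^ i)"
proof -
  have "H n x = (\<Sum>m\<in>{1..2^n}. x ^ sdeg m)" by (simp add: H_def)
  also have "\<dots> = (\<Sum>i\<in>{0..n}. \<Sum>m\<in>{m. m \<in> {1..2^n} \<and> sdeg m = i}. x ^ sdeg m)"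
    by (rule sum.group[symmetric]) (auto simp: sdeg_le)
  also have "\<dots> = (\<Sum>i = 0..n. real (ecount i n) * x ^ i)"
  proof (rule sum.cong[OF refl])
    fix i
    have "(\<Sum>m\<in>{m. m \<in> {1..2^n} \<and> sdeg m = i}. x ^ sdeg m) = (\<Sum>m\<in>{m. m \<in> {1..2^n} \<and> sdeg m = i}. x ^ i)"
      by (rule sum.cong) auto
    also have "\<dots> = real (ecount i n) * x ^ i" by (simp add: ecount_def)
    finally show "(\<Sum>m\<in>{m. m \<in> {1..2^n} \<and> sdeg m = i}. x ^ sdeg m) = real (ecount i n) * x ^ i" .
  qed
  finally show ?thesis .
qed

theorem mainTheorem7:
  fixes n :: nat
  assumes "n \<ge> 1"
  shows "(\<forall>x::real. H n x = (\<Sum>i = 0..n. real (ecount i n) * x ^ i))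
    \<and> (\<forall>i. i \<le> n - n div 2 - 1 \<longrightarrow> real (ecount i n) = 3 ^ i)
    \<and> (\<forall>i. n - n div 2 \<le> i \<and> i \<le> n - 1 \<longrightarrow>
         real (ecount i n) =
           2 ^ n * real (i choose (n - i)) / 2 ^ (i + 1)
           + 3 ^ i * (1 + 2 ^ n * (\<Sum>j = n - n div 2..i.
               (2 * real n - 5 * real j) / (real j * 6 ^ j) * real (j choose (n - j)))))
    \<and> real (ecount n n) = 1"
proof (intro conjI allI impI)
  fix x :: real
  show "H n x = (\<Sum>i = 0..n. real (ecount i n) * x ^ i)" by (rule H_expand)
next
  fix i assume i: "i \<le> n - n div 2 - 1"
  then have "i \<le> n - 1" by linarith
  then show "real (ecount i n) = 3 ^ i" using c_eq_G G_low i assms by simp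
next
  fix i assume i: "n - n div 2 \<le> i \<and> i \<le> n - 1"
  then show "real (ecount i n) =
           2 ^ n * real (i choose (n - i)) / 2 ^ (i + 1)
           + 3 ^ i * (1 + 2 ^ n * (\<Sum>j = n - n div 2..i.
               (2 * real n - 5 * real j) / (real j * 6 ^ j) * real (j choose (n - j))))"
    using c_eq_G[of n i] assms by (simp add: G_def)
next
  show "real (ecount n n) = 1" using c_top assms by simp
qed

end
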